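(* Let $(S,d)$ be a finite metric space partitioned into two disjoint groups $S=S_1\cup S_2$, let $k_1,k_2$ be nonnegative integers with $k=k_1+k_2$, and let $r^*$ be the optimal radius of the fair $k$-center problem on this instance. For $l\in\{1,2\}$ let $\Gamma_l\subseteq S_l$ be a $2r^*$-independent center set of $S_l$. Suppose that for some $l\in\{1,2\}$ we have $|\Gamma_l|>k_l$ and $|\Gamma_{3-l}|\le k_{3-l}$. Define $\Gamma_l'=\{i\in\Gamma_l : d(i,\Gamma_{3-l})>3r^*\}$ and $C=\Gamma_l'\cup\Gamma_{3-l}$. Then (1) $|\Gamma_l'|\le k_l$, $|\Gamma_{3-l}|\le k_{3-l}$ and $|C|\le k$; and (2) $d(s,C)\le 5r^*$ for every $s\in S$.
   Context: The fair $k$-center problem: a set $C\subseteq S$ is feasible if $|C\cap S_l|\le k_l$ for each group $l$; its cost is $\max_{s\in S}d(s,C)$ with $d(s,C)=\min_{c\in C}d(s,c)$ (and $d(s,\emptyset)=\infty$). The optimal radius $r^*$ is the minimum cost over all feasible $C$. For $T\subseteq S$, a set $\Gamma\subseteq T$ is a $\lambda$-independent center set of $T$ if (1) $d(p,q)>\lambda$ for any two distinct $p,q\in\Gamma$, and (2) for every $p\in T$ there is $q\in\Gamma$ with $d(p,q)\le\lambda$. *)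

theory Defs
  imports "HOL-Library.Extended_Real"
begin

definition metric_on :: "'a set \<Rightarrow> ('a \<Rightarrow> 'a \<Rightarrow> real) \<Rightarrow> bool" where
  "metric_on S d \<longleftrightarrow>
     (\<forall>x\<in>S. \<forall>y\<in>S. d x y \<ge> 0 \<and> (d x y = 0 \<longleftrightarrow> x = y) \<and> d x y = d y x) \<and>
     (\<forall>x\<in>S. \<forall>y\<in>S. \<forall>z\<in>S. d x z \<le> d x y + d y z)"

text \<open>d(s,C) = min over c in C of d(s,c); equals \<infinity> when C is empty.\<close>
definition dist_set :: "('a \<Rightarrow> 'a \<Rightarrow> real) \<Rightarrow> 'a \<Rightarrow> 'a set \<Rightarrow> ereal" where
  "dist_set d s C = (INF c\<in>C. ereal (d s c))"

definition kc_cost :: "('a \<Rightarrow> 'a \<Rightarrow> real) \<Rightarrow> 'a set \<Rightarrow> 'a set \<Rightarrow> ereal" where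
  "kc_cost d S C = (SUP s\<in>S. dist_set d s C)"

definition fair_feasible :: "'a set \<Rightarrow> (nat \<Rightarrow> 'a set) \<Rightarrow> (nat \<Rightarrow> nat) \<Rightarrow> 'a set \<Rightarrow> bool" where
  "fair_feasible S Sg kg C \<longleftrightarrow>
     C \<subseteq> S \<and> card (C \<inter> Sg 1) \<le> kg 1 \<and> card (C \<inter> Sg 2) \<le> kg 2"

text \<open>Optimal radius r*: minimum cost over all feasible C (the family is finite, so the infimum is attained).\<close>
definition opt_radius :: "('a \<Rightarrow> 'a \<Rightarrow> real) \<Rightarrow> 'a set \<Rightarrow> (nat \<Rightarrow> 'a set) \<Rightarrow> (nat \<Rightarrow> nat) \<Rightarrow> ereal" where
  "opt_radius d S Sg kg = (INF C\<in>{C. fair_feasible S Sg kg C}. kc_cost d S C)"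

definition indep_center_set :: "('a \<Rightarrow> 'a \<Rightarrow> real) \<Rightarrow> ereal \<Rightarrow> 'a set \<Rightarrow> 'a set \<Rightarrow> bool" where
  "indep_center_set d lam T \<Gamma> \<longleftrightarrow>
     \<Gamma> \<subseteq> T \<and>
     (\<forall>p\<in>\<Gamma>. \<forall>q\<in>\<Gamma>. p \<noteq> q \<longrightarrow> ereal (d p q) > lam) \<and>
     (\<forall>p\<in>T. \<exists>q\<in>\<Gamma>. ereal (d p q) \<le> lam)"

end

theory Submission
  imports Defs
begin

lemma INF_attained:
  fixes f :: "'b \<Rightarrow> 'c::complete_linorder"
  assumes "finite A" "A \<noteq> {}"
  shows "\<exists>x\<in>A. (INF y\<in>A. f y) = f x"
proof -
  have "Min (f ` A) = Inf (f ` A)" using assms by (simp add: Min_Inf)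
  moreover have "Min (f ` A) \<in> f ` A" using assms by simp
  ultimately show ?thesis by auto
qed

lemma dist_set_le: "c \<in> C \<Longrightarrow> dist_set d s C \<le> ereal (d s c)"
  unfolding dist_set_def by (rule INF_lower)

lemma dist_set_obtain:
  assumes "finite C" "dist_set d s C \<le> ereal r"
  shows "\<exists>c\<in>C. d s c \<le> r"
proof (cases "C = {}")
  case True
  then show ?thesis using assms by (simp add: dist_set_def top_ereal_def)
next
  case False
  then obtain c where "c \<in> C" "dist_set d s C = ereal (d s c)"
    using INF_attained[OF assms(1) False, of "\<lambda>c. ereal (d s c)"] by (auto simp: dist_set_def)
  then show ?thesis using assms by auto
qed

theorem theorem1:
  fixes S :: "'a set" and d :: "'a \<Rightarrow> 'a \<Rightarrow> real"
    and Sg :: "nat \<Rightarrow> 'a set" and kg :: "nat \<Rightarrow> nat"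
    and \<Gamma> :: "nat \<Rightarrow> 'a set" and l :: nat
  assumes "finite S" and "metric_on S d"
    and "S = Sg 1 \<union> Sg 2" and "Sg 1 \<inter> Sg 2 = {}"
    and "\<And>j. j \<in> {1, 2} \<Longrightarrow>
           indep_center_set d (2 * opt_radius d S Sg kg) (Sg j) (\<Gamma> j)"
    and "l \<in> {1, 2}"
    and "card (\<Gamma> l) > kg l" and "card (\<Gamma> (3 - l)) \<le> kg (3 - l)"
  shows "card {i \<in> \<Gamma> l. dist_set d i (\<Gamma> (3 - l)) > 3 * opt_radius d S Sg kg} \<le> kg l
       \<and> card (\<Gamma> (3 - l)) \<le> kg (3 - l)
       \<and> card ({i \<in> \<Gamma> l. dist_set d i (\<Gamma> (3 - l)) > 3 * opt_radius d S Sg kg} \<union> \<Gamma> (3 - l))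
            \<le> kg 1 + kg 2
       \<and> (\<forall>s\<in>S. dist_set d s
              ({i \<in> \<Gamma> l. dist_set d i (\<Gamma> (3 - l)) > 3 * opt_radius d S Sg kg} \<union> \<Gamma> (3 - l))
            \<le> 5 * opt_radius d S Sg kg)"
proof -
  define R where "R = opt_radius d S Sg kg"
  define m where "m = 3 - l"
  define G where "G = {i \<in> \<Gamma> l. dist_set d i (\<Gamma> m) > 3 * R}"
  have m12: "m \<in> {1,2}" and ml: "m \<noteq> l" using assms(6) by (auto simp: m_def)
  have SU: "S = Sg l \<union> Sg m" "Sg l \<inter> Sg m = {}" using assms(3,4,6) m_def by auto
  have indl: "indep_center_set d (2 * R) (Sg l) (\<Gamma> l)" using assms(5)[OF assms(6)] R_def by simp
  have indm: "indep_center_set d (2 * R) (Sg m) (\<Gamma> m)" using assms(5)[OF m12] R_def by simp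
  have finS: "\<And>X. X \<subseteq> S \<Longrightarrow> finite X" using assms(1) finite_subset by blast
  have Gl: "\<Gamma> l \<subseteq> Sg l" and Gm: "\<Gamma> m \<subseteq> Sg m" using indl indm by (auto simp: indep_center_set_def)
  have finGl: "finite (\<Gamma> l)" and finGm: "finite (\<Gamma> m)" using Gl Gm SU finS by blast+
  have GG: "G \<subseteq> \<Gamma> l" by (auto simp: G_def)
  have "\<Gamma> l \<noteq> {}" using assms(7) by auto
  hence Sne: "S \<noteq> {}" using Gl SU by auto
  have famfin: "finite {C. fair_feasible S Sg kg C}"
    by (rule finite_subset[of _ "Pow S"]) (auto simp: fair_feasible_def assms(1))
  have famne: "{C. fair_feasible S Sg kg C} \<noteq> {}"
    by (rule ccontr) (auto simp: fair_feasible_def)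
  obtain Cs where Cs: "fair_feasible S Sg kg Cs" "kc_cost d S Cs = R"
    using INF_attained[OF famfin famne, of "kc_cost d S"] by (auto simp: R_def opt_radius_def)
  have costle: "\<And>s. s \<in> S \<Longrightarrow> dist_set d s Cs \<le> R"
    using Cs(2) unfolding kc_cost_def by (metis SUP_upper)
  have finCs: "finite Cs" using Cs(1) finS by (auto simp: fair_feasible_def)
  have CsS: "Cs \<subseteq> S" using Cs(1) by (auto simp: fair_feasible_def)
  have met: "\<And>x y z. x \<in> S \<Longrightarrow> y \<in> S \<Longrightarrow> z \<in> S \<Longrightarrow> d x z \<le> d x y + d y z"
    using assms(2) by (auto simp: metric_on_def)
  have msym: "\<And>x y. x \<in> S \<Longrightarrow> y \<in> S \<Longrightarrow> d x y = d y x"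
    using assms(2) by (auto simp: metric_on_def)
  have mnn: "\<And>x y. x \<in> S \<Longrightarrow> y \<in> S \<Longrightarrow> d x y \<ge> 0"
    using assms(2) by (auto simp: metric_on_def)
  show ?thesis
  proof (cases "R = \<infinity>")
    case True
    have "G = {}" using True by (auto simp: G_def)
    have "5 * R = \<infinity>" using True by simp
    hence "\<forall>s\<in>S. dist_set d s (G \<union> \<Gamma> m) \<le> 5 * R" by simp
    moreover have "card (G \<union> \<Gamma> m) \<le> kg 1 + kg 2" using \<open>G = {}\<close> assms(8) m_def[symmetric] m12 by auto
    ultimately have "card G \<le> kg l \<and> card (\<Gamma> m) \<le> kg m \<and> card (G \<union> \<Gamma> m) \<le> kg 1 + kg 2
       \<and> (\<forall>s\<in>S. dist_set d s (G \<union> \<Gamma> m) \<le> 5 * R)" using \<open>G = {}\<close> assms(8) m_def by simp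
    thus ?thesis unfolding G_def R_def m_def .
  next
    case False
    obtain s0 where "s0 \<in> S" using Sne by auto
    have "dist_set d s0 Cs \<ge> 0"
      unfolding dist_set_def using mnn \<open>s0 \<in> S\<close> CsS by (auto intro!: INF_greatest)
    hence "R \<ge> 0" using costle[OF \<open>s0 \<in> S\<close>] by simp
    then obtain r where r: "R = ereal r" "r \<ge> 0" using False by (cases R) auto
    have cov: "\<And>s. s \<in> S \<Longrightarrow> \<exists>c\<in>Cs. d s c \<le> r"
      using costle r(1) dist_set_obtain[OF finCs] by metis
    have covl: "\<And>p. p \<in> Sg l \<Longrightarrow> \<exists>q\<in>\<Gamma> l. d p q \<le> 2*r"
      using indl r by (auto simp: indep_center_set_def)
    have covm: "\<And>p. p \<in> Sg m \<Longrightarrow> \<exists>q\<in>\<Gamma> m. d p q \<le> 2*r"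
      using indm r by (auto simp: indep_center_set_def)
    have sepl: "\<And>p q. p \<in> \<Gamma> l \<Longrightarrow> q \<in> \<Gamma> l \<Longrightarrow> p \<noteq> q \<Longrightarrow> d p q > 2*r"
      using indl r by (auto simp: indep_center_set_def)
    have c1: "card G \<le> kg l"
    proof -
      define c where "c i = (SOME c. c \<in> Cs \<and> d i c \<le> r)" for i
      have cprop: "c i \<in> Cs \<and> d i (c i) \<le> r" if "i \<in> S" for i
        using cov[OF that] unfolding c_def by (metis (mono_tags, lifting) someI)
      have cin: "c i \<in> Cs \<inter> Sg l" if "i \<in> G" for i
      proof -
        have iS: "i \<in> S" "i \<in> \<Gamma> l" using that GG Gl SU by auto
        have ci: "c i \<in> Cs" "d i (c i) \<le> r" using cprop[OF iS(1)] by auto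
        have "c i \<in> S" using ci CsS by auto
        show ?thesis
        proof (rule ccontr)
          assume "c i \<notin> Cs \<inter> Sg l"
          hence "c i \<in> Sg m" using ci \<open>c i \<in> S\<close> SU by auto
          then obtain q where q: "q \<in> \<Gamma> m" "d (c i) q \<le> 2*r" using covm by auto
          have "q \<in> S" using q Gm SU by auto
          have "d i q \<le> 3*r" using met[OF iS(1) \<open>c i \<in> S\<close> \<open>q \<in> S\<close>] ci q by linarith
          hence "dist_set d i (\<Gamma> m) \<le> 3 * R"
            using dist_set_le[OF q(1), of d i] r by (auto elim: order_trans)
          thus False using that by (auto simp: G_def)
        qed
      qed
      have "inj_on c G"
      proof (rule inj_onI)
        fix i j assume ij: "i \<in> G" "j \<in> G" "c i = c j"
        have S': "i \<in> S" "j \<in> S" "c i \<in> S" using ij GG Gl SU cin by auto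
        have "d i j \<le> d i (c i) + d (c i) j" using met S' by auto
        also have "d (c i) j = d j (c j)" using msym S' ij(3) by auto
        finally have "d i j \<le> d i (c i) + d j (c j)" .
        moreover have "d i (c i) \<le> r" "d j (c j) \<le> r" using cprop S' by auto
        ultimately have "d i j \<le> 2*r" by linarith
        thus "i = j" using sepl ij GG by force
      qed
      hence "card G \<le> card (Cs \<inter> Sg l)"
        using cin finCs by (intro card_inj_on_le) auto
      also have "\<dots> \<le> kg l" using Cs(1) assms(6) by (auto simp: fair_feasible_def)
      finally show ?thesis .
    qed
    have c3: "card (G \<union> \<Gamma> m) \<le> kg 1 + kg 2"
    proof -
      have "card (G \<union> \<Gamma> m) \<le> card G + card (\<Gamma> m)" by (rule card_Un_le)
      also have "\<dots> \<le> kg l + kg m" using c1 assms(8) m_def by simp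
      also have "\<dots> = kg 1 + kg 2" using assms(6) m_def by auto
      finally show ?thesis .
    qed
    have c4: "\<forall>s\<in>S. dist_set d s (G \<union> \<Gamma> m) \<le> 5 * R"
    proof
      fix s assume sS: "s \<in> S"
      have "\<exists>q\<in>G \<union> \<Gamma> m. d s q \<le> 5*r"
      proof (cases "s \<in> Sg m")
        case True
        then obtain q where "q \<in> \<Gamma> m" "d s q \<le> 2*r" using covm by auto
        thus ?thesis using r by (intro bexI[of _ q]) auto
      next
        case False
        hence "s \<in> Sg l" using sS SU by auto
        then obtain p where p: "p \<in> \<Gamma> l" "d s p \<le> 2*r" using covl by auto
        show ?thesis
        proof (cases "p \<in> G")
          case True thus ?thesis using p r by (intro bexI[of _ p]) auto
        next
          case False
          hence "dist_set d p (\<Gamma> m) \<le> ereal (3*r)" using p r by (auto simp: G_def not_less)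
          then obtain q where q: "q \<in> \<Gamma> m" "d p q \<le> 3*r" using dist_set_obtain[OF finGm] by blast
          have "p \<in> S" "q \<in> S" using p q Gl Gm SU by auto
          have "d s q \<le> 5*r" using met[OF sS \<open>p \<in> S\<close> \<open>q \<in> S\<close>] p q by linarith
          thus ?thesis using q by (intro bexI[of _ q]) auto
        qed
      qed
      then obtain q where "q \<in> G \<union> \<Gamma> m" "d s q \<le> 5*r" by auto
      thus "dist_set d s (G \<union> \<Gamma> m) \<le> 5 * R"
        using dist_set_le[of q "G \<union> \<Gamma> m" d s] r by (auto elim: order_trans)
    qed
    have "card G \<le> kg l \<and> card (\<Gamma> m) \<le> kg m \<and> card (G \<union> \<Gamma> m) \<le> kg 1 + kg 2
       \<and> (\<forall>s\<in>S. dist_set d s (G \<union> \<Gamma> m) \<le> 5 * R)" using c1 c3 c4 assms(8) m_def by simp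
    thus ?thesis unfolding G_def R_def m_def .
  qed
qed

end
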